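(* Let $\alpha,\rho>0$ and let $b_f:\mathbb R_+\to(0,\infty)$ be a bounded function decreasing to $0$ on $\mathbb R_+=[0,\infty)$ with $\int_0^\infty b_f(s)s^{d-1}\,ds<\infty$. Let $f,g:\mathbb R^d\to\mathbb R_+$ be measurable, $f$ bounded, such that $f(x)\le b_f(|x|)$ for all $x\in\mathbb R^d$ and $g(x)\ge\alpha$ for all $|x|\le\rho$. Then $$\sup_{x\in\mathbb R^d,\ \eta\in\Gamma}\ \sum_{y\in\eta} f(x-y)\exp\Bigl\{-\sum_{z\in\eta\setminus\{y\}} g(z-y)\Bigr\}<\infty.$$
   Context: $\Gamma$ denotes the set of locally finite subsets $\gamma\subset\mathbb R^d$, i.e. $|\gamma\cap B|<\infty$ for every bounded Borel set $B\subset\mathbb R^d$, where $|\cdot|$ of a finite set is its cardinality; $|x|$ is the Euclidean norm. *)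

theory Defs
  imports "HOL-Analysis.Analysis"
begin

definition Gamma :: "'a::euclidean_space set set" where
  "Gamma = {\<gamma>. \<forall>B. B \<in> sets borel \<longrightarrow> bounded B \<longrightarrow> finite (\<gamma> \<inter> B)}"

text \<open>exp(- sum_{z in eta minus y} g(z-y)), which is 0 when the (nonnegative) sum diverges.\<close>
definition interaction_weight :: "('a::euclidean_space \<Rightarrow> real) \<Rightarrow> 'a set \<Rightarrow> 'a \<Rightarrow> real" where
  "interaction_weight g \<eta> y =
     (if (\<lambda>z. g (z - y)) summable_on (\<eta> - {y})
      then exp (- (\<Sum>\<^sub>\<infinity>z\<in>\<eta> - {y}. g (z - y))) else 0)"

end

theory Submission
  imports Defs
begin


lemma pow_diff_le:
  fixes R q :: real
  assumes "0 \<le> q" "q \<le> R"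
  shows "R ^ n - q ^ n \<le> real n * (R - q) * R ^ (n - 1)"
proof -
  have "R ^ n - q ^ n = (R - q) * (\<Sum>i<n. q ^ (n - Suc i) * R ^ i)"
    by (rule power_diff_sumr2)
  also have "(\<Sum>i<n. q ^ (n - Suc i) * R ^ i) \<le> (\<Sum>i<n. R ^ (n - 1))"
  proof (rule sum_mono)
    fix i assume i: "i \<in> {..<n}"
    have "q ^ (n - Suc i) * R ^ i \<le> R ^ (n - Suc i) * R ^ i"
      using assms by (intro mult_right_mono power_mono) auto
    also have "\<dots> = R ^ (n - 1)" using i by (simp add: power_add[symmetric])
    finally show "q ^ (n - Suc i) * R ^ i \<le> R ^ (n - 1)" .
  qed
  hence "(R - q) * (\<Sum>i<n. q ^ (n - Suc i) * R ^ i) \<le> (R - q) * (\<Sum>i<n. R ^ (n - 1))"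
    using assms by (intro mult_left_mono) auto
  finally show ?thesis by (simp add: mult_ac)
qed




lemma packing_volume:
  fixes x :: "'a::euclidean_space" and T :: "'a set" and r k :: real
  assumes r: "r > 0" and k: "k \<ge> 0" and fin: "finite T"
    and sep: "\<And>t t'. t \<in> T \<Longrightarrow> t' \<in> T \<Longrightarrow> t \<noteq> t' \<Longrightarrow> dist t t' > 2 * r"
    and sh: "\<And>t. t \<in> T \<Longrightarrow> k \<le> dist x t \<and> dist x t \<le> k + 1"
  shows "real (card T) * r ^ DIM('a) \<le> (k + 1 + r) ^ DIM('a) - (max 0 (k - r)) ^ DIM('a)"
proof -
  define q where "q = max 0 (k - r)"
  define R where "R = k + 1 + r"
  define u where "u = unit_ball_vol (real DIM('a))"
  have u: "u > 0" unfolding u_def by simp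
  have q0: "q \<ge> 0" and R0: "R \<ge> 0" using r k by (auto simp: q_def R_def)
  define U where "U = (\<Union>t\<in>T. ball t r)"
  have disj: "disjoint_family_on (\<lambda>t. ball t r) T"
  proof (auto simp: disjoint_family_on_def)
    fix t t' z assume "t \<in> T" "t' \<in> T" "t \<noteq> t'" "dist t z < r" "dist t' z < r"
    moreover have "dist t t' \<le> dist t z + dist t' z" by (simp add: dist_triangle2)
    ultimately show False using sep[of t t'] by auto
  qed
  have "(\<Sum>t\<in>T. emeasure lborel (ball t r)) = emeasure lborel U"
    unfolding U_def by (rule sum_emeasure) (use disj fin in auto)
  moreover have "(\<Sum>t\<in>T. emeasure lborel (ball t r)) = ennreal (real (card T) * (u * r ^ DIM('a)))"
    using r by (simp add: emeasure_ball u_def ennreal_of_nat_eq_real_of_nat ennreal_mult')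
  ultimately have mU: "emeasure lborel U = ennreal (real (card T) * (u * r ^ DIM('a)))" by simp
  have Uo: "U \<in> sets borel" unfolding U_def by (intro borel_open open_UN) auto
  have dj2: "ball x q \<inter> U = {}"
  proof (auto simp: U_def)
    fix t z assume t: "t \<in> T" and z1: "dist x z < q" and z2: "dist t z < r"
    have "dist x t \<le> dist x z + dist t z" by (simp add: dist_triangle2)
    moreover have "q > 0" using z1 zero_le_dist[of x z] by linarith
    hence "q = k - r" unfolding q_def by auto
    ultimately show False using sh[OF t] z1 z2 by linarith
  qed
  have sub: "ball x q \<union> U \<subseteq> ball x R"
  proof (auto simp: U_def)
    fix z assume "dist x z < q" thus "dist x z < R" unfolding q_def R_def using k r by auto
  next
    fix t z assume t: "t \<in> T" and z2: "dist t z < r"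
    have "dist x z \<le> dist x t + dist t z" by (simp add: dist_triangle)
    thus "dist x z < R" using sh[OF t] z2 unfolding R_def by linarith
  qed
  have "emeasure lborel (ball x q) + emeasure lborel U = emeasure lborel (ball x q \<union> U)"
    using dj2 Uo by (intro plus_emeasure) auto
  also have "\<dots> \<le> emeasure lborel (ball x R)" by (rule emeasure_mono[OF sub]) auto
  finally have fin1: "ennreal (u * q ^ DIM('a)) + ennreal (real (card T) * (u * r ^ DIM('a)))
      \<le> ennreal (u * R ^ DIM('a))"
    using q0 R0 mU by (simp add: emeasure_ball u_def)
  have "u * q ^ DIM('a) + real (card T) * (u * r ^ DIM('a)) \<le> u * R ^ DIM('a)"
  proof -
    have a1: "u * q ^ DIM('a) \<ge> 0" and a2: "real (card T) * (u * r ^ DIM('a)) \<ge> 0"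
      and a3: "u * R ^ DIM('a) \<ge> 0" using u q0 r R0 by auto
    have "ennreal (u * q ^ DIM('a) + real (card T) * (u * r ^ DIM('a))) \<le> ennreal (u * R ^ DIM('a))"
      using fin1 by (simp add: ennreal_plus[OF a1 a2])
    thus ?thesis using ennreal_le_iff[OF a3] by blast
  qed
  hence "u * (real (card T) * r ^ DIM('a)) \<le> u * (R ^ DIM('a) - q ^ DIM('a))"
    by (simp add: algebra_simps)
  hence "real (card T) * r ^ DIM('a) \<le> R ^ DIM('a) - q ^ DIM('a)"
    using u by (simp add: mult_le_cancel_left_pos)
  thus ?thesis unfolding q_def R_def .
qed




lemma packing_select:
  fixes U :: "'a::metric_space set" and N :: "'a \<Rightarrow> nat" and \<rho> :: real
  assumes rho: "\<rho> > 0" and hN: "\<And>y G. y \<in> U \<Longrightarrow> G \<subseteq> U \<inter> cball y \<rho> \<Longrightarrow> finite G \<Longrightarrow> card G \<le> N y"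
  shows "finite S \<Longrightarrow> S \<subseteq> U \<Longrightarrow> \<exists>T\<subseteq>S. (\<forall>t\<in>T. \<forall>t'\<in>T. t \<noteq> t' \<longrightarrow> dist t t' > \<rho> / 2)
           \<and> (\<Sum>y\<in>S. 1 / real (N y)) \<le> real (card T)"
proof (induction S rule: finite_psubset_induct)
  case (psubset S)
  show ?case
  proof (cases "S = {}")
    case True thus ?thesis by auto
  next
    case False
    then obtain t where t: "t \<in> S" by auto
    define G where "G = S \<inter> cball t (\<rho> / 2)"
    define S' where "S' = S - G"
    have tG: "t \<in> G" using t rho unfolding G_def by auto
    have ss: "S' \<subset> S" using tG t unfolding S'_def by blast
    have su: "S' \<subseteq> U" using psubset.prems unfolding S'_def by auto
    obtain T' where T': "T' \<subseteq> S'"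
      "\<forall>t\<in>T'. \<forall>t'\<in>T'. t \<noteq> t' \<longrightarrow> dist t t' > \<rho> / 2"
      "(\<Sum>y\<in>S'. 1 / real (N y)) \<le> real (card T')"
      using psubset.IH[OF ss su] by blast
    have finG: "finite G" using psubset.hyps unfolding G_def by auto
    have cG: "card G \<ge> 1" using finG tG by (metis One_nat_def Suc_leI card_gt_0_iff empty_iff)
    have far: "dist t t' > \<rho> / 2" if "t' \<in> T'" for t'
      using that T'(1) t unfolding S'_def G_def by (auto simp: dist_commute)
    have tT': "t \<notin> T'" using T'(1) tG unfolding S'_def by auto
    have sumG: "(\<Sum>y\<in>G. 1 / real (N y)) \<le> 1"
    proof -
      have "(\<Sum>y\<in>G. 1 / real (N y)) \<le> (\<Sum>y\<in>G. 1 / real (card G))"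
      proof (rule sum_mono)
        fix y assume y: "y \<in> G"
        have "G \<subseteq> U \<inter> cball y \<rho>"
        proof
          fix z assume z: "z \<in> G"
          have "dist y z \<le> dist t y + dist t z" by (simp add: dist_triangle3 add.commute)
          also have "\<dots> \<le> \<rho>" using y z unfolding G_def by auto
          finally show "z \<in> U \<inter> cball y \<rho>" using z psubset.prems unfolding G_def by auto
        qed
        hence "card G \<le> N y" using hN[of y G] y finG psubset.prems unfolding G_def by auto
        thus "1 / real (N y) \<le> 1 / real (card G)" using cG
          by (intro divide_left_mono) auto
      qed
      also have "\<dots> = 1" using cG by simp
      finally show ?thesis .
    qed
    have "(\<Sum>y\<in>S. 1 / real (N y)) = (\<Sum>y\<in>G. 1 / real (N y)) + (\<Sum>y\<in>S'. 1 / real (N y))"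
      unfolding S'_def using sum.subset_diff[of G S, OF _ psubset.hyps] G_def
      by (simp add: add.commute)
    also have "\<dots> \<le> 1 + real (card T')" using sumG T'(3) by linarith
    also have "\<dots> = real (card (insert t T'))"
      using tT' T'(1) psubset.hyps unfolding S'_def by (simp add: finite_subset)
    finally have s: "(\<Sum>y\<in>S. 1 / real (N y)) \<le> real (card (insert t T'))" .
    show ?thesis
      apply (rule exI[of _ "insert t T'"])
      using s t T' far unfolding S'_def by (auto simp: dist_commute)
  qed
qed




lemma Gamma_finite_cball:
  assumes "\<eta> \<in> Gamma" shows "finite (\<eta> \<inter> cball y r)"
  using assms unfolding Gamma_def by auto

lemma weight_nonneg: "interaction_weight g \<eta> y \<ge> 0"
  unfolding interaction_weight_def by auto

lemma weight_bound:
  fixes g :: "'a::euclidean_space \<Rightarrow> real"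
  assumes a: "\<alpha> > 0" and eta: "\<eta> \<in> Gamma" and y: "y \<in> \<eta>"
    and r: "\<rho> \<ge> 0" and g0: "\<And>x. g x \<ge> 0" and ga: "\<And>x. norm x \<le> \<rho> \<Longrightarrow> g x \<ge> \<alpha>"
  shows "interaction_weight g \<eta> y \<le> (1 + 1 / \<alpha>) / real (card (\<eta> \<inter> cball y \<rho>))"
proof -
  define A where "A = \<eta> \<inter> cball y \<rho>"
  define N where "N = card A"
  have finA: "finite A" unfolding A_def using Gamma_finite_cball[OF eta] .
  have "interaction_weight g \<eta> y \<le> exp (- (\<alpha> * (real N - 1)))"
  proof (cases "(\<lambda>z. g (z - y)) summable_on (\<eta> - {y})")
    case False thus ?thesis unfolding interaction_weight_def by simp
  next
    case True
    have "(\<Sum>z\<in>A - {y}. g (z - y)) \<le> (\<Sum>\<^sub>\<infinity>z\<in>\<eta> - {y}. g (z - y))"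
      by (rule finite_sum_le_infsum[OF True]) (use finA g0 in \<open>auto simp: A_def\<close>)
    moreover have "real (card (A - {y})) * \<alpha> \<le> (\<Sum>z\<in>A - {y}. g (z - y))"
    proof (rule sum_bounded_below)
      fix z assume "z \<in> A - {y}"
      hence "norm (z - y) \<le> \<rho>" unfolding A_def by (auto simp: dist_norm norm_minus_commute)
      thus "\<alpha> \<le> g (z - y)" by (rule ga)
    qed
    moreover have "y \<in> A" using y r unfolding A_def by auto
    hence "card (A - {y}) = N - 1" "N \<ge> 1" using finA unfolding N_def
      by (auto simp: card_Diff_singleton Suc_leI card_gt_0_iff intro!: Suc_leI)
    ultimately have "\<alpha> * (real N - 1) \<le> (\<Sum>\<^sub>\<infinity>z\<in>\<eta> - {y}. g (z - y))"
      by (simp add: of_nat_diff algebra_simps)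
    thus ?thesis using True unfolding interaction_weight_def by simp
  qed
  also have "\<dots> \<le> (1 + 1 / \<alpha>) / real N"
  proof -
    have yA: "y \<in> A" using y r unfolding A_def by auto
    hence N1: "real N \<ge> 1" using finA unfolding N_def
      by (metis One_nat_def Suc_leI card_gt_0_iff empty_iff of_nat_1 of_nat_le_iff)
    define u where "u = \<alpha> * (real N - 1)"
    have u0: "u \<ge> 0" using a N1 unfolding u_def by auto
    have "1 + u \<le> exp u" by (rule exp_ge_add_one_self)
    hence "exp (- u) \<le> 1 / (1 + u)" using u0 by (simp add: exp_minus field_simps)
    also have "1 / (1 + u) \<le> (1 + 1 / \<alpha>) / real N"
    proof -
      have "real N \<le> (1 + 1 / \<alpha>) * (1 + u)"
      proof -
        have h: "\<alpha> * \<alpha> * 1 \<le> \<alpha> * (\<alpha> * real N)" using a N1 by (simp add: mult_left_mono)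
        show ?thesis using a N1 unfolding u_def apply (simp add: field_simps) using h by linarith
      qed
      thus ?thesis using u0 N1 by (simp add: field_simps)
    qed
    finally show ?thesis unfolding u_def .
  qed
  finally show ?thesis unfolding N_def A_def .
qed




lemma anti_le:
  assumes "antimono_on {0..} (b::real\<Rightarrow>real)" "0 \<le> s" "s \<le> t"
  shows "b t \<le> b s"
  using monotone_onD[OF assms(1), of s t] assms(2,3) by simp

lemma step_sum_bound:
  fixes b :: "real \<Rightarrow> real" and d m :: nat
  assumes anti: "antimono_on {0..} b" and bpos: "\<And>s. s \<ge> 0 \<Longrightarrow> b s > 0"
  shows "ennreal (\<Sum>k<m. if 2 \<le> k then b (real k) * (real k - 1) ^ d else 0)
          \<le> (\<integral>\<^sup>+ s\<in>{0..}. ennreal (b s * s ^ d) \<partial>lborel)"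
proof -
  define c where "c k = (if 2 \<le> k then b (real k) * (real k - 1) ^ d else 0)" for k :: nat
  have c0: "c k \<ge> 0" for k unfolding c_def using bpos[of "real k"] by auto
  define S where "S k = {real k - 1..<real k}" for k :: nat
  have "ennreal (\<Sum>k<m. c k) = (\<Sum>k<m. ennreal (c k) * emeasure lborel (S k))"
    using c0 by (simp add: S_def)
  also have "\<dots> = (\<Sum>k<m. \<integral>\<^sup>+ s. ennreal (c k) * indicator (S k) s \<partial>lborel)"
    by (simp add: nn_integral_cmult_indicator S_def)
  also have "\<dots> = (\<integral>\<^sup>+ s. (\<Sum>k<m. ennreal (c k) * indicator (S k) s) \<partial>lborel)"
    by (rule nn_integral_sum[symmetric]) (simp add: S_def)
  also have "\<dots> \<le> (\<integral>\<^sup>+ s. ennreal (b s * s ^ d) * indicator {0..} s \<partial>lborel)"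
  proof (rule nn_integral_mono)
    fix s :: real
    define k0 where "k0 = nat \<lfloor>s\<rfloor> + 1"
    have "(\<Sum>k<m. ennreal (c k) * indicator (S k) s) =
          (\<Sum>k<m. if k = k0 then ennreal (c k) * indicator (S k) s else 0)"
    proof (rule sum.cong)
      fix k assume "k \<in> {..<m}"
      show "ennreal (c k) * indicator (S k) s = (if k = k0 then ennreal (c k) * indicator (S k) s else 0)"
      proof (cases "k = k0")
        case False
        show ?thesis
        proof (cases "2 \<le> k \<and> s \<in> S k")
          case True
          hence "real k - 1 \<le> s" "s < real k" "2 \<le> k" unfolding S_def by auto
          hence "\<lfloor>s\<rfloor> = int k - 1" by (simp add: floor_eq_iff)
          hence "k = k0" unfolding k0_def using \<open>2 \<le> k\<close> by simp
          thus ?thesis using False by simp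
        next
          case False
          thus ?thesis by (auto simp: c_def indicator_def)
        qed
      qed simp
    qed simp
    also have "\<dots> = (if k0 < m then ennreal (c k0) * indicator (S k0) s else 0)"
      by (simp add: sum.delta)
    also have "\<dots> \<le> ennreal (b s * s ^ d) * indicator {0..} s"
    proof (cases "2 \<le> k0 \<and> s \<in> S k0")
      case True
      hence s: "real k0 - 1 \<le> s" "s < real k0" "2 \<le> k0" unfolding S_def by auto
      hence s0: "s \<ge> 0" by linarith
      have "b (real k0) \<le> b s" using anti_le[OF anti s0] s by simp
      moreover have "(real k0 - 1) ^ d \<le> s ^ d" using s by (intro power_mono) auto
      moreover have "b (real k0) \<ge> 0" using bpos[of "real k0"] by simp
      ultimately have "c k0 \<le> b s * s ^ d"
        unfolding c_def using s by (simp add: mult_mono)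
      thus ?thesis using True s0 c0[of k0] by (auto simp: indicator_def ennreal_leI)
    next
      case False
      thus ?thesis by (auto simp: c_def indicator_def)
    qed
    finally show "(\<Sum>k<m. ennreal (c k) * indicator (S k) s) \<le> ennreal (b s * s ^ d) * indicator {0..} s" .
  qed
  finally show ?thesis unfolding c_def .
qed




theorem lemma3p1:
  fixes f g :: "'a::euclidean_space \<Rightarrow> real" and b :: "real \<Rightarrow> real"
    and \<alpha> \<rho> :: real
  assumes "\<alpha> > 0" and "\<rho> > 0"
    and "\<And>s. s \<ge> 0 \<Longrightarrow> b s > 0"
    and "bounded (b ` {0..})"
    and "antimono_on {0..} b"
    and "(b \<longlongrightarrow> 0) at_top"
    and "(\<integral>\<^sup>+ s\<in>{0..}. ennreal (b s * s ^ (DIM('a) - 1)) \<partial>lborel) < \<infinity>"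
    and "f \<in> borel_measurable borel" and "g \<in> borel_measurable borel"
    and "\<And>x. f x \<ge> 0" and "\<And>x. g x \<ge> 0"
    and "bounded (range f)"
    and "\<And>x. f x \<le> b (norm x)"
    and "\<And>x. norm x \<le> \<rho> \<Longrightarrow> g x \<ge> \<alpha>"
  shows "(SUP (x, \<eta>)\<in>UNIV \<times> Gamma.
            \<Sum>\<^sub>\<infinity>y\<in>\<eta>. ennreal (f (x - y) * interaction_weight g \<eta> y)) < \<infinity>"
proof -
  note a = assms(1) and rho = assms(2) and bpos = assms(3) and anti = assms(5)
    and fin_int = assms(7) and f0 = assms(10) and g0 = assms(11) and fb = assms(13)
    and ga = assms(14)
  define d where "d = DIM('a)"
  have d1: "d \<ge> 1" unfolding d_def by (simp add: DIM_positive Suc_leI)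
  define r where "r = \<rho> / 4"
  have r0: "r > 0" using rho unfolding r_def by simp
  define C where "C = 1 + 1 / \<alpha>"
  have C0: "C > 0" using a unfolding C_def by (simp add: add_pos_pos)
  define D where "D = real d * (1 + 2 * r) / r ^ d"
  have D0: "D > 0" using d1 r0 unfolding D_def by simp
  define A where "A = 1 + r"
  define M where "M = C * D * (2 + A) ^ (d - 1)"
  define Ie where "Ie = (\<integral>\<^sup>+ s\<in>{0..}. ennreal (b s * s ^ (d - 1)) \<partial>lborel)"
  have Ie_fin: "Ie < \<infinity>" using fin_int unfolding Ie_def d_def .
  define I where "I = enn2real Ie"
  define u where "u k = b (real k) * C * D * (real k + A) ^ (d - 1)" for k :: nat
  have u0: "u k \<ge> 0" for k
    using bpos[of "real k"] C0 D0 r0 unfolding u_def A_def by simp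
  define K where "K = u 0 + u 1 + M * I"

  have usum: "(\<Sum>k<m. u k) \<le> K" for m
  proof -
    define c where "c k = (if 2 \<le> k then b (real k) * (real k - 1) ^ (d - 1) else 0)" for k :: nat
    define E where "E k = (if k < 2 then u k else 0)" for k :: nat
    have uk: "u k \<le> E k + M * c k" for k
    proof (cases "k < 2")
      case True thus ?thesis by (simp add: E_def c_def)
    next
      case False
      hence k2: "real k \<ge> 2" by simp
      have h: "r * 2 \<le> r * real k" using k2 r0 by (intro mult_left_mono) auto
      have "real k + A \<le> (2 + A) * (real k - 1)"
        unfolding A_def apply (simp add: algebra_simps) using h k2 by linarith
      hence "(real k + A) ^ (d - 1) \<le> ((2 + A) * (real k - 1)) ^ (d - 1)"
        using r0 unfolding A_def by (intro power_mono) auto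
      also have "\<dots> = (2 + A) ^ (d - 1) * (real k - 1) ^ (d - 1)" by (simp add: power_mult_distrib)
      finally have pw: "(real k + A) ^ (d - 1) \<le> (2 + A) ^ (d - 1) * (real k - 1) ^ (d - 1)" .
      have "u k = (b (real k) * C * D) * (real k + A) ^ (d - 1)" unfolding u_def by simp
      also have "\<dots> \<le> (b (real k) * C * D) * ((2 + A) ^ (d - 1) * (real k - 1) ^ (d - 1))"
        using pw bpos[of "real k"] C0 D0 by (intro mult_left_mono) auto
      also have "\<dots> = M * c k" using False unfolding M_def c_def by (simp add: algebra_simps)
      finally show ?thesis using False by (simp add: E_def)
    qed
    have Esum: "(\<Sum>k<m. E k) \<le> u 0 + u 1"
    proof (induction m)
      case 0 thus ?case using u0[of 0] u0[of 1] by simp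
    next
      case (Suc m)
      show ?case
      proof (cases "m < 2")
        case True
        hence "m = 0 \<or> m = 1" by auto
        thus ?thesis using u0[of 0] u0[of 1] by (auto simp: E_def numeral_2_eq_2 lessThan_Suc)
      next
        case False thus ?thesis using Suc.IH by (simp add: E_def)
      qed
    qed
    have csum: "(\<Sum>k<m. c k) \<le> I"
    proof -
      have c0: "c k \<ge> 0" for k using bpos[of "real k"] unfolding c_def by auto
      have "ennreal (\<Sum>k<m. c k) \<le> Ie"
        unfolding c_def Ie_def by (rule step_sum_bound[OF anti bpos])
      hence "enn2real (ennreal (\<Sum>k<m. c k)) \<le> enn2real Ie" using Ie_fin by (intro enn2real_mono) auto
      thus ?thesis using c0 unfolding I_def by (simp add: sum_nonneg)
    qed
    have M0: "M \<ge> 0" using C0 D0 r0 unfolding M_def A_def by simp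
    have "(\<Sum>k<m. u k) \<le> (\<Sum>k<m. E k + M * c k)" by (rule sum_mono) (rule uk)
    also have "\<dots> = (\<Sum>k<m. E k) + M * (\<Sum>k<m. c k)" by (simp add: sum.distrib sum_distrib_left)
    also have "\<dots> \<le> u 0 + u 1 + M * I" using Esum csum M0 by (intro add_mono mult_left_mono) auto
    finally show ?thesis unfolding K_def .
  qed
  have shell: "(\<Sum>y\<in>F'. f (x - y) * interaction_weight g \<eta> y) \<le> u k"
    if eta: "\<eta> \<in> Gamma" and F': "finite F'" "F' \<subseteq> \<eta>"
      and sh: "\<And>y. y \<in> F' \<Longrightarrow> nat \<lfloor>norm (x - y)\<rfloor> = k" for \<eta> F' x k
  proof -
    define N where "N y = card (\<eta> \<inter> cball y \<rho>)" for y
    have shk: "real k \<le> norm (x - y) \<and> norm (x - y) \<le> real k + 1" if "y \<in> F'" for y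
    proof -
      have "\<lfloor>norm (x - y)\<rfloor> \<ge> 0" by simp
      hence "\<lfloor>norm (x - y)\<rfloor> = int k" using sh[OF that] by (auto simp: nat_eq_iff)
      thus ?thesis by linarith
    qed
    have "(\<Sum>y\<in>F'. f (x - y) * interaction_weight g \<eta> y) \<le> (\<Sum>y\<in>F'. b (real k) * C * (1 / real (N y)))"
    proof (rule sum_mono)
      fix y assume y: "y \<in> F'"
      have "f (x - y) \<le> b (real k)"
        using fb[of "x - y"] anti_le[OF anti _ conjunct1[OF shk[OF y]]] by simp
      moreover have "interaction_weight g \<eta> y \<le> C * (1 / real (N y))"
        using weight_bound[OF a eta _ _ g0 ga, of y] y F' rho unfolding C_def N_def by auto
      ultimately have "f (x - y) * interaction_weight g \<eta> y \<le> b (real k) * (C * (1 / real (N y)))"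
        using f0[of "x - y"] weight_nonneg[of g \<eta> y] bpos[of "real k"] by (intro mult_mono) auto
      thus "f (x - y) * interaction_weight g \<eta> y \<le> b (real k) * C * (1 / real (N y))"
        by (simp only: mult.assoc)
    qed
    also have "\<dots> = b (real k) * C * (\<Sum>y\<in>F'. 1 / real (N y))" by (simp add: sum_distrib_left)
    also obtain T where T: "T \<subseteq> F'" "\<forall>t\<in>T. \<forall>t'\<in>T. t \<noteq> t' \<longrightarrow> dist t t' > \<rho> / 2"
        "(\<Sum>y\<in>F'. 1 / real (N y)) \<le> real (card T)"
    proof -
      have hN: "card G \<le> N y" if "y \<in> \<eta>" "G \<subseteq> \<eta> \<inter> cball y \<rho>" "finite G" for y G
        unfolding N_def using that by (intro card_mono Gamma_finite_cball[OF eta])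
      show ?thesis using packing_select[OF rho, of \<eta> N F', OF hN F'] that by blast
    qed
    have "b (real k) * C * (\<Sum>y\<in>F'. 1 / real (N y)) \<le> b (real k) * C * real (card T)"
      using T(3) bpos[of "real k"] C0 by (intro mult_left_mono) auto
    also have "real (card T) \<le> D * (real k + A) ^ (d - 1)"
    proof -
      have finT: "finite T" using T(1) F' finite_subset by blast
      have "real (card T) * r ^ d \<le> (real k + 1 + r) ^ d - (max 0 (real k - r)) ^ d"
        unfolding d_def
      proof (rule packing_volume[OF r0 _ finT])
        show "\<And>t t'. t \<in> T \<Longrightarrow> t' \<in> T \<Longrightarrow> t \<noteq> t' \<Longrightarrow> dist t t' > 2 * r"
          using T(2) unfolding r_def by auto
        show "\<And>t. t \<in> T \<Longrightarrow> real k \<le> dist x t \<and> dist x t \<le> real k + 1"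
          using shk T(1) by (auto simp: dist_norm)
      qed simp
      also have "\<dots> \<le> real d * ((real k + 1 + r) - max 0 (real k - r)) * (real k + 1 + r) ^ (d - 1)"
        by (rule pow_diff_le) (use r0 in auto)
      also have "\<dots> \<le> real d * (1 + 2 * r) * (real k + A) ^ (d - 1)"
      proof -
        have "real k + 1 + r - max 0 (real k - r) \<le> 1 + 2 * r" by linarith
        hence "real d * (real k + 1 + r - max 0 (real k - r)) \<le> real d * (1 + 2 * r)"
          by (intro mult_left_mono) auto
        moreover have e: "real k + A = real k + 1 + r" unfolding A_def by simp
        ultimately show ?thesis unfolding e using r0 by (intro mult_right_mono) auto
      qed
      finally have "real (card T) * r ^ d \<le> real d * (1 + 2 * r) * (real k + A) ^ (d - 1)" .
      thus ?thesis using r0 unfolding D_def by (simp add: field_simps)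
    qed
    hence "b (real k) * C * real (card T) \<le> b (real k) * C * (D * (real k + A) ^ (d - 1))"
      using bpos[of "real k"] C0 by (intro mult_left_mono) auto
    finally show ?thesis unfolding u_def by (simp add: mult_ac)
  qed

  have finsum: "(\<Sum>y\<in>F. f (x - y) * interaction_weight g \<eta> y) \<le> K"
    if eta: "\<eta> \<in> Gamma" and F: "finite F" "F \<subseteq> \<eta>" for \<eta> F x
  proof -
    define h where "h y = nat \<lfloor>norm (x - y)\<rfloor>" for y
    define m where "m = Suc (Max (insert 0 (h ` F)))"
    have "(\<Sum>y\<in>F. f (x - y) * interaction_weight g \<eta> y)
        = (\<Sum>k\<in>h ` F. \<Sum>y\<in>{y. y \<in> F \<and> h y = k}. f (x - y) * interaction_weight g \<eta> y)"
      by (rule sum.image_gen[OF F(1)])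
    also have "\<dots> \<le> (\<Sum>k\<in>h ` F. u k)"
      by (rule sum_mono, rule shell[OF eta]) (use F in \<open>auto simp: h_def\<close>)
    also have "\<dots> \<le> (\<Sum>k<m. u k)"
    proof (rule sum_mono2)
      show "h ` F \<subseteq> {..<m}" unfolding m_def using F(1)
        by (auto simp: less_Suc_eq_le)
    qed (use u0 in auto)
    also have "\<dots> \<le> K" by (rule usum)
    finally show ?thesis .
  qed

  have each: "(\<Sum>\<^sub>\<infinity>y\<in>\<eta>. ennreal (f (x - y) * interaction_weight g \<eta> y)) \<le> ennreal K"
    if eta: "\<eta> \<in> Gamma" for x \<eta>
  proof (rule infsum_le_finite_sums)
    fix F assume F: "finite F" "F \<subseteq> \<eta>"
    have "(\<Sum>y\<in>F. ennreal (f (x - y) * interaction_weight g \<eta> y))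
        = ennreal (\<Sum>y\<in>F. f (x - y) * interaction_weight g \<eta> y)"
      using f0 weight_nonneg by (intro sum_ennreal mult_nonneg_nonneg) auto
    also have "\<dots> \<le> ennreal K" using finsum[OF eta F] by (rule ennreal_leI)
    finally show "(\<Sum>y\<in>F. ennreal (f (x - y) * interaction_weight g \<eta> y)) \<le> ennreal K" .
  qed (rule nonneg_summable_on_complete, simp)
  have "(SUP (x, \<eta>)\<in>UNIV \<times> Gamma.
            \<Sum>\<^sub>\<infinity>y\<in>\<eta>. ennreal (f (x - y) * interaction_weight g \<eta> y)) \<le> ennreal K"
    by (rule SUP_least) (auto intro: each)
  also have "\<dots> < \<infinity>" by simp
  finally show ?thesis .
qed


end
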